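(* Let $n\ge1$ and let $L$ be a simplicial complex on the ground set $[k]$. Then the matching $\mathcal{M}_L$ on the directed graph $G_L$ is acyclic, i.e. the directed graph obtained from $G_L$ by reversing the direction of every edge in $\mathcal{M}_L$ contains no directed cycle.
   Context: Give $D^n$ the regular CW structure with cells $e_-^i,e_+^i$ for $0\le i\le n-1$ (for each $i$, $e_\pm^i$ are the two open hemispheres of $S^i\subseteq S^{n-1}$, so the closure of $e_\pm^{i}$ is $e_\pm^i\cup\bigcup_{j<i}(e_-^j\cup e_+^j)$) together with the top cell $e_\bullet^n$ whose boundary is $S^{n-1}$. Give $(D^n)^k$ the product cell structure, with cells $c=c_1\times\dots\times c_k$. A simplicial complex $L$ on $[k]$ is a family of subsets of $[k]$ closed under taking subsets. For a cell $c$ let $\mathrm{supp}(c)=\{i: c_i=e_\bullet^n\}$; the polyhedral product $\mathcal{Z}_L(D^n,S^{n-1})$ is the subcomplex of $(D^n)^k$ consisting of the cells $c$ with $\mathrm{supp}(c)\in L$. $G_L$ is the directed graph whose vertices are these cells, with an edge $c\to c'$ whenever $c'$ lies in the closure of $c$ and $\dim c'=\dim c-1$. Let $\mathcal{M}$ be the set of edges $e_-^{i+1}\to e_+^i$ ($0\le i\le n-2$) and $e_\bullet^n\to e_+^{n-1}$ of the analogous graph for $D^n$. Define $\mathcal{M}_1=\{c\to c'\in G_L : c_1\to c'_1\in\mathcal{M}\}$ and, for $1\le j\le k-1$, $\mathcal{M}_{j+1}=\{c\to c'\in G_L: $ neither $c$ nor $c'$ belongs to an edge of $\mathcal{M}_1\cup\dots\cup\mathcal{M}_j$,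 and $c_{j+1}\to c'_{j+1}\in\mathcal{M}\}$. Set $\mathcal{M}_L=\bigcup_{j=1}^k\mathcal{M}_j$; this is a matching (each cell lies in at most one edge of $\mathcal{M}_L$). *)

theory Defs
  imports Main
begin

text \<open>Cells of the regular CW structure on D^n:
  Em i = e_-^i, Ep i = e_+^i (0 <= i <= n-1), Eb = e_bullet^n (top cell).\<close>
datatype dcell = Em nat | Ep nat | Eb

fun dcell_valid :: "nat \<Rightarrow> dcell \<Rightarrow> bool" where
  "dcell_valid n (Em i) = (i < n)"
| "dcell_valid n (Ep i) = (i < n)"
| "dcell_valid n Eb = True"

fun dcell_dim :: "nat \<Rightarrow> dcell \<Rightarrow> nat" where
  "dcell_dim n (Em i) = i"
| "dcell_dim n (Ep i) = i"
| "dcell_dim n Eb = n"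

fun dcell_closure :: "nat \<Rightarrow> dcell \<Rightarrow> dcell set" where
  "dcell_closure n (Em i) = {Em i} \<union> {Em j | j. j < i} \<union> {Ep j | j. j < i}"
| "dcell_closure n (Ep i) = {Ep i} \<union> {Em j | j. j < i} \<union> {Ep j | j. j < i}"
| "dcell_closure n Eb = {c. dcell_valid n c}"

definition Mdisk :: "nat \<Rightarrow> (dcell \<times> dcell) set" where
  "Mdisk n = {(Em (i+1), Ep i) | i. i + 2 \<le> n} \<union> {(Eb, Ep (n - 1))}"

text \<open>Cells of (D^n)^k are lists c of length k; coordinate c_i (i in [k]) is c ! (i-1).\<close>
definition supp :: "dcell list \<Rightarrow> nat set" where
  "supp c = {i. 1 \<le> i \<and> i \<le> length c \<and> c ! (i - 1) = Eb}"

definition simplicial_complex :: "nat \<Rightarrow> nat set set \<Rightarrow> bool" where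
  "simplicial_complex k L \<longleftrightarrow> (\<forall>\<sigma>\<in>L. \<sigma> \<subseteq> {1..k}) \<and> (\<forall>\<sigma>\<in>L. \<forall>\<tau>. \<tau> \<subseteq> \<sigma> \<longrightarrow> \<tau> \<in> L)"

definition cell_dim :: "nat \<Rightarrow> dcell list \<Rightarrow> nat" where
  "cell_dim n c = sum_list (map (dcell_dim n) c)"

definition ZL_cells :: "nat \<Rightarrow> nat \<Rightarrow> nat set set \<Rightarrow> dcell list set" where
  "ZL_cells n k L = {c. length c = k \<and> (\<forall>x\<in>set c. dcell_valid n x) \<and> supp c \<in> L}"

text \<open>Closure of a product cell is the product of closures.\<close>
definition in_closure :: "nat \<Rightarrow> dcell list \<Rightarrow> dcell list \<Rightarrow> bool" where
  "in_closure n c' c \<longleftrightarrow> list_all2 (\<lambda>a b. a \<in> dcell_closure n b) c' c"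

definition GL_edges :: "nat \<Rightarrow> nat \<Rightarrow> nat set set \<Rightarrow> (dcell list \<times> dcell list) set" where
  "GL_edges n k L = {(c, c'). c \<in> ZL_cells n k L \<and> c' \<in> ZL_cells n k L \<and>
      in_closure n c' c \<and> cell_dim n c' + 1 = cell_dim n c}"

definition in_some_edge :: "'a \<Rightarrow> ('a \<times> 'a) set \<Rightarrow> bool" where
  "in_some_edge x E \<longleftrightarrow> (\<exists>(a, b)\<in>E. x = a \<or> x = b)"

text \<open>Mupto n k L j = M_1 \<union> ... \<union> M_j. The step adds M_{j+1}, which uses coordinate j+1,
  i.e. list position j. (For j = 0 the non-membership condition is vacuous, giving M_1.)\<close>
fun Mupto :: "nat \<Rightarrow> nat \<Rightarrow> nat set set \<Rightarrow> nat \<Rightarrow> (dcell list \<times> dcell list) set" where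
  "Mupto n k L 0 = {}"
| "Mupto n k L (Suc j) = Mupto n k L j \<union>
     {(c, c') \<in> GL_edges n k L. \<not> in_some_edge c (Mupto n k L j) \<and>
        \<not> in_some_edge c' (Mupto n k L j) \<and> (c ! j, c' ! j) \<in> Mdisk n}"

definition MatchL :: "nat \<Rightarrow> nat \<Rightarrow> nat set set \<Rightarrow> (dcell list \<times> dcell list) set" where
  "MatchL n k L = Mupto n k L k"

definition GL_reversed :: "nat \<Rightarrow> nat \<Rightarrow> nat set set \<Rightarrow> (dcell list \<times> dcell list) set" where
  "GL_reversed n k L = (GL_edges n k L - MatchL n k L) \<union> (MatchL n k L)\<inverse>"

end

theory Submission
  imports Defs
begin

definition newM :: "nat \<Rightarrow> nat \<Rightarrow> nat set set \<Rightarrow> nat \<Rightarrow> (dcell list \<times> dcell list) set" where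
 "newM n k L j = {(c, c') \<in> GL_edges n k L. \<not> in_some_edge c (Mupto n k L j) \<and>
        \<not> in_some_edge c' (Mupto n k L j) \<and> (c ! j, c' ! j) \<in> Mdisk n}"

lemma Mupto_Suc': "Mupto n k L (Suc j) = Mupto n k L j \<union> newM n k L j"
  by (simp add: newM_def)

declare Mupto.simps(2)[simp del]

lemma Mupto_mono: "i \<le> j \<Longrightarrow> Mupto n k L i \<subseteq> Mupto n k L j"
  by (induct rule: dec_induct) (auto simp: Mupto_Suc')

lemma ise_mono: "in_some_edge x E \<Longrightarrow> E \<subseteq> F \<Longrightarrow> in_some_edge x F"
  unfolding in_some_edge_def by blast

lemma ise_iff: "in_some_edge x E \<longleftrightarrow> (\<exists>y. (x,y) \<in> E \<or> (y,x) \<in> E)"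
  unfolding in_some_edge_def by auto

lemma Mupto_stage: "e \<in> Mupto n k L m \<Longrightarrow> \<exists>t<m. e \<in> newM n k L t"
  by (induction m) (auto simp: Mupto_Suc' less_Suc_eq)

lemma newM_Mupto: "t < m \<Longrightarrow> newM n k L t \<subseteq> Mupto n k L m"
  using Mupto_mono[of "Suc t" m n k L] by (auto simp: Mupto_Suc')

lemma no_src_tgt:
  assumes "(x,y) \<in> Mupto n k L m" "(u,x) \<in> Mupto n k L m'"
  shows False
proof -
  obtain s where s: "(x,y) \<in> newM n k L s" using Mupto_stage[OF assms(1)] by blast
  obtain t where t: "(u,x) \<in> newM n k L t" using Mupto_stage[OF assms(2)] by blast
  consider "s = t" | "s < t" | "t < s" by arith
  then show False
  proof cases
    case 1 then show ?thesis using s t by (auto simp: newM_def Mdisk_def)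
  next
    case 2
    have "(x,y) \<in> Mupto n k L t" using newM_Mupto[OF 2] s by blast
    then show ?thesis using t by (auto simp: newM_def ise_iff)
  next
    case 3
    have "(u,x) \<in> Mupto n k L s" using newM_Mupto[OF 3] t by blast
    then show ?thesis using s by (auto simp: newM_def ise_iff)
  qed
qed

lemma stage_exact:
  assumes "(a,b) \<in> Mupto n k L m" "z = a \<or> z = b"
    "\<not> in_some_edge z (Mupto n k L j)" "in_some_edge z (Mupto n k L (Suc j))"
  shows "(a,b) \<in> newM n k L j"
proof -
  obtain t where t: "(a,b) \<in> newM n k L t" using Mupto_stage[OF assms(1)] by blast
  consider "t = j" | "t < j" | "j < t" by arith
  then show ?thesis proof cases
    case 1 thus ?thesis using t by simp
  next
    case 2
    have "(a,b) \<in> Mupto n k L j" using newM_Mupto[OF 2] t by blast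
    hence "in_some_edge z (Mupto n k L j)" using assms(2) by (auto simp: ise_iff)
    thus ?thesis using assms(3) by simp
  next
    case 3
    have "in_some_edge z (Mupto n k L t)"
      using ise_mono[OF assms(4) Mupto_mono[of "Suc j" t]] 3 by simp
    thus ?thesis using t assms(2) by (auto simp: newM_def)
  qed
qed

lemma clos_dim: "dcell_valid n a \<Longrightarrow> a' \<in> dcell_closure n a \<Longrightarrow>
   dcell_dim n a' \<le> dcell_dim n a \<and> (dcell_dim n a' = dcell_dim n a \<longrightarrow> a' = a)"
  by (cases a; cases a') auto

lemma Mdisk_dim: "(a,b) \<in> Mdisk n \<Longrightarrow> n \<ge> 1 \<Longrightarrow> dcell_dim n b + 1 = dcell_dim n a"
  by (auto simp: Mdisk_def)

fun gval :: "nat \<Rightarrow> dcell \<Rightarrow> nat" where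
  "gval n (Em m) = 2*m - 1" | "gval n (Ep i) = 2*i + 2" | "gval n Eb = 2*n - 1"

lemma g_Mdisk: "(a,b) \<in> Mdisk n \<Longrightarrow> n \<ge> 1 \<Longrightarrow> gval n a < gval n b"
  by (auto simp: Mdisk_def)

lemma g_down: "dcell_valid n a \<Longrightarrow> a' \<in> dcell_closure n a \<Longrightarrow> a' \<noteq> a \<Longrightarrow> (a,a') \<notin> Mdisk n
   \<Longrightarrow> n \<ge> 1 \<Longrightarrow> gval n a' < gval n a"
proof (cases a; cases a')
  fix m j assume "a = Em m" "a' = Ep j" "dcell_valid n a" "a' \<in> dcell_closure n a" "(a,a') \<notin> Mdisk n"
  then show "gval n a' < gval n a"
    by (auto simp: Mdisk_def)
qed (auto simp: Mdisk_def)


lemma cell_dim_sum: "cell_dim n c = (\<Sum>p<length c. dcell_dim n (c!p))"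
  unfolding cell_dim_def by (simp add: sum_list_sum_nth atLeast0LessThan)

lemma single_coord:
  assumes n: "n \<ge> 1" and e: "(d,c) \<in> GL_edges n k L" and md: "(d!t, c!t) \<in> Mdisk n"
    and t: "t < k" and i: "i < k" "i \<noteq> t"
  shows "d!i = c!i"
proof (rule ccontr)
  assume ne: "d!i \<noteq> c!i"
  from e have len: "length d = k" "length c = k" and vd: "\<forall>x\<in>set d. dcell_valid n x"
    and cl: "list_all2 (\<lambda>a b. a \<in> dcell_closure n b) c d" and dm: "cell_dim n c + 1 = cell_dim n d"
    by (auto simp: GL_edges_def ZL_cells_def in_closure_def)
  have le: "dcell_dim n (c!p) \<le> dcell_dim n (d!p) \<and> (dcell_dim n (c!p) = dcell_dim n (d!p) \<longrightarrow> c!p = d!p)"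
    if p: "p < k" for p
  proof -
    have "c!p \<in> dcell_closure n (d!p)" using list_all2_nthD[OF cl] p len by auto
    moreover have "dcell_valid n (d!p)" using vd p len by auto
    ultimately show ?thesis using clos_dim by blast
  qed
  define f where "f p = dcell_dim n (c!p) + (if p = t then 1 else 0)" for p
  define G where "G p = dcell_dim n (d!p)" for p
  have "sum f {..<k} < sum G {..<k}"
  proof (rule sum_strict_mono_ex1)
    show "finite {..<k}" by simp
    show "\<forall>p\<in>{..<k}. f p \<le> G p" using le Mdisk_dim[OF md n] by (auto simp: f_def G_def)
    show "\<exists>p\<in>{..<k}. f p < G p" using le[OF i(1)] ne i by (auto simp: f_def G_def)
  qed
  moreover have "sum f {..<k} = cell_dim n c + 1"
    using t len by (simp add: f_def sum.distrib cell_dim_sum)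
  moreover have "sum G {..<k} = cell_dim n d"
    using len by (simp add: G_def cell_dim_sum)
  ultimately show False using dm by simp
qed

lemma phi_edge:
  assumes n: "n \<ge> 1" and e: "(c,c') \<in> GL_reversed n k L" and j: "j < k"
    and nc: "\<not> in_some_edge c (Mupto n k L j)" and nc': "\<not> in_some_edge c' (Mupto n k L j)"
  shows "gval n (c' ! j) \<le> gval n (c ! j)"
proof -
  consider "(c,c') \<in> GL_edges n k L" "(c,c') \<notin> MatchL n k L" | "(c',c) \<in> MatchL n k L"
    using e by (auto simp: GL_reversed_def)
  then show ?thesis
  proof cases
    case 1
    from 1(1) have len: "length c = k" "length c' = k" and vd: "\<forall>x\<in>set c. dcell_valid n x"
      and cl: "list_all2 (\<lambda>a b. a \<in> dcell_closure n b) c' c"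
      by (auto simp: GL_edges_def ZL_cells_def in_closure_def)
    have cj: "c'!j \<in> dcell_closure n (c!j)" using list_all2_nthD[OF cl] j len by auto
    have vj: "dcell_valid n (c!j)" using vd j len by auto
    show ?thesis
    proof (cases "c'!j = c!j")
      case True thus ?thesis by simp
    next
      case False
      have "(c!j, c'!j) \<notin> Mdisk n"
      proof
        assume "(c!j, c'!j) \<in> Mdisk n"
        hence "(c,c') \<in> newM n k L j" using 1(1) nc nc' by (simp add: newM_def)
        hence "(c,c') \<in> MatchL n k L" using newM_Mupto[OF j] by (auto simp: MatchL_def)
        thus False using 1(2) by simp
      qed
      thus ?thesis using g_down[OF vj cj False _ n] by simp
    qed
  next
    case 2
    obtain t where t: "t < k" "(c',c) \<in> newM n k L t"
      using 2 Mupto_stage[of "(c',c)" n k L k] unfolding MatchL_def by blast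
    hence ge: "(c',c) \<in> GL_edges n k L" and md: "(c'!t, c!t) \<in> Mdisk n" by (auto simp: newM_def)
    show ?thesis
    proof (cases "t = j")
      case True thus ?thesis using g_Mdisk[OF md n] by simp
    next
      case False
      thus ?thesis using single_coord[OF n ge md t(1) j] by simp
    qed
  qed
qed

definition srcM where "srcM n k L x = (\<exists>y. (x,y) \<in> MatchL n k L)"
definition tgtM where "tgtM n k L x = (\<exists>y. (y,x) \<in> MatchL n k L)"
definition hpot where "hpot n k L x = 2 * cell_dim n x +
   (if srcM n k L x then 0 else if tgtM n k L x then 2 else (1::nat))"

lemma h_edge:
  assumes e: "(c,c') \<in> GL_reversed n k L"
  shows "hpot n k L c' \<le> hpot n k L c \<and>
    (hpot n k L c' = hpot n k L c \<longrightarrow> (c',c) \<in> MatchL n k L \<or> (srcM n k L c \<and> \<not> srcM n k L c'))"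
proof -
  consider "(c,c') \<in> GL_edges n k L" "(c,c') \<notin> MatchL n k L" | "(c',c) \<in> MatchL n k L"
    using e by (auto simp: GL_reversed_def)
  then show ?thesis
  proof cases
    case 1
    hence "cell_dim n c' + 1 = cell_dim n c" by (auto simp: GL_edges_def)
    thus ?thesis by (auto simp: hpot_def)
  next
    case 2
    have ge: "(c',c) \<in> GL_edges n k L"
      using Mupto_stage[of "(c',c)"] 2 by (auto simp: MatchL_def newM_def)
    hence "cell_dim n c + 1 = cell_dim n c'" by (auto simp: GL_edges_def)
    moreover have "srcM n k L c'" "tgtM n k L c" using 2 by (auto simp: srcM_def tgtM_def)
    moreover have "\<not> srcM n k L c" using 2 no_src_tgt by (auto simp: srcM_def MatchL_def)
    ultimately show ?thesis using 2 by (auto simp: hpot_def)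
  qed
qed

theorem proposition3p3:
  fixes n k :: nat and L :: "nat set set"
  assumes "n \<ge> 1" and "simplicial_complex k L"
  shows "acyclic (GL_reversed n k L)"
proof -
  note n = assms(1)
  define R where "R = GL_reversed n k L"
  define Req where "Req = {(a,b). (a,b) \<in> R \<and> hpot n k L b = hpot n k L a}"
  have Req_sub: "Req \<subseteq> R" by (auto simp: Req_def)
  have key: "(a,b) \<in> R\<^sup>+ \<Longrightarrow> hpot n k L b \<le> hpot n k L a \<and>
      (hpot n k L b = hpot n k L a \<longrightarrow> (a,b) \<in> Req\<^sup>+)" for a b
  proof (induction rule: trancl_induct)
    case (base y)
    thus ?case using h_edge[of a y] by (auto simp: R_def Req_def)
  next
    case (step y z)
    have "hpot n k L z \<le> hpot n k L y" using h_edge[of y z] step(2) by (auto simp: R_def)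
    moreover have "hpot n k L z = hpot n k L y \<Longrightarrow> (y,z) \<in> Req" using step(2) by (auto simp: Req_def)
    ultimately show ?case
    proof (intro conjI impI)
      assume a1: "hpot n k L z \<le> hpot n k L y" and eq: "hpot n k L z = hpot n k L a"
      have "hpot n k L y \<le> hpot n k L a" using step(3) by blast
      hence e1: "hpot n k L y = hpot n k L a" "hpot n k L z = hpot n k L y" using a1 eq by linarith+
      have "(a,y) \<in> Req\<^sup>+" using step(3) e1(1) by blast
      moreover have "(y,z) \<in> Req" using step(2) e1(2) by (auto simp: Req_def)
      ultimately show "(a,z) \<in> Req\<^sup>+" by simp
    qed (use step(3) in auto)
  qed
  have Req_edge: "(a,b) \<in> Req \<Longrightarrow> (b,a) \<in> MatchL n k L \<or> (srcM n k L a \<and> \<not> srcM n k L b)" for a b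
    using h_edge[of a b] by (auto simp: Req_def R_def)
  show ?thesis unfolding acyclic_def R_def[symmetric]
  proof (intro allI notI)
    fix x assume "(x,x) \<in> R\<^sup>+"
    hence xx: "(x,x) \<in> Req\<^sup>+" using key by blast
    define C where "C = {y. (x,y) \<in> Req\<^sup>* \<and> (y,x) \<in> Req\<^sup>*}"
    have xC: "x \<in> C" by (simp add: C_def)
    have cyc: "(y,y) \<in> Req\<^sup>+" if "y \<in> C" for y
    proof -
      have "(y,x) \<in> Req\<^sup>*" "(x,y) \<in> Req\<^sup>*" using that by (auto simp: C_def)
      thus ?thesis using xx
        by (meson rtrancl_trancl_trancl trancl_rtrancl_trancl)
    qed
    have inM: "in_some_edge y (MatchL n k L)" if yC0: "y \<in> C" for y
    proof -
      obtain w where "(y,w) \<in> Req" using tranclD[OF cyc[OF yC0]] by blast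
      from Req_edge[OF this] show ?thesis by (auto simp: ise_iff srcM_def)
    qed
    have k0: "0 < k"
    proof (rule ccontr)
      assume "\<not> 0 < k"
      hence "MatchL n k L = {}" by (simp add: MatchL_def)
      thus False using inM[OF xC] by (simp add: ise_iff)
    qed
    define P where "P j \<longleftrightarrow> (\<exists>y\<in>C. in_some_edge y (Mupto n k L (Suc j)))" for j
    have "P (k-1)" using inM[OF xC] xC k0 by (auto simp: P_def MatchL_def)
    define js where "js = (LEAST j. P j)"
    have Pjs: "P js" unfolding js_def by (rule LeastI[of P "k-1", OF \<open>P (k-1)\<close>])
    have "js \<le> k - 1" unfolding js_def by (rule Least_le[of P "k-1", OF \<open>P (k-1)\<close>])
    hence jsk: "js < k" using k0 by simp
    have notin: "\<not> in_some_edge y (Mupto n k L js)" if "y \<in> C" for y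
    proof (cases js)
      case 0 thus ?thesis by (simp add: ise_iff)
    next
      case (Suc j')
      have "\<not> P j'" unfolding js_def[symmetric] using Suc not_less_Least[of j' P] js_def by simp
      thus ?thesis using that Suc by (auto simp: P_def)
    qed
    have phi_step: "y \<in> C \<longrightarrow> gval n (y!js) \<le> gval n (a!js)" if aC: "a \<in> C" and ay: "(a,y) \<in> Req\<^sup>*" for a y
      using ay
    proof (induction rule: rtrancl_induct)
      case base thus ?case by simp
    next
      case (step y b)
      show ?case
      proof
        assume bC: "b \<in> C"
        have yC: "y \<in> C"
        proof -
          have "(x,a) \<in> Req\<^sup>*" using aC by (simp add: C_def)
          hence "(x,y) \<in> Req\<^sup>*" using step(1) by simp
          moreover have "(y,x) \<in> Req\<^sup>*" using step(2) bC
            by (simp add: C_def converse_rtrancl_into_rtrancl)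
          ultimately show ?thesis by (simp add: C_def)
        qed
        have "gval n (b!js) \<le> gval n (y!js)"
          using phi_edge[OF n _ jsk notin[OF yC] notin[OF bC]] step(2) Req_sub by (auto simp: R_def)
        thus "gval n (b!js) \<le> gval n (a!js)" using step(3) yC by simp
      qed
    qed
    obtain z where zC: "z \<in> C" and zin: "in_some_edge z (Mupto n k L (Suc js))"
      using Pjs by (auto simp: P_def)
    have zz: "(z,z) \<in> Req\<^sup>+" using cyc[OF zC] .
    have memC: "y \<in> C" if "(z,y) \<in> Req\<^sup>*" "(y,z) \<in> Req\<^sup>*" for y
      using that zC unfolding C_def by (auto intro: rtrancl_trans)
    have sub: "Mupto n k L (Suc js) \<subseteq> MatchL n k L"
      using Mupto_mono[of "Suc js" k] jsk by (simp add: MatchL_def)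
    from zin obtain y where "(z,y) \<in> Mupto n k L (Suc js) \<or> (y,z) \<in> Mupto n k L (Suc js)"
      by (auto simp: ise_iff)
    then show False
    proof
      assume zy: "(z,y) \<in> Mupto n k L (Suc js)"
      hence srcz: "srcM n k L z" using sub by (auto simp: srcM_def)
      obtain v where zv: "(z,v) \<in> Req\<^sup>*" and vz: "(v,z) \<in> Req" using tranclD2[OF zz] by blast
      have "(z,v) \<in> MatchL n k L" using Req_edge[OF vz] srcz by blast
      hence "(z,v) \<in> newM n k L js"
        using stage_exact[of z v n k L k z js] notin[OF zC] zin by (simp add: MatchL_def)
      hence lt: "gval n (z!js) < gval n (v!js)" using g_Mdisk n by (auto simp: newM_def)
      have vC: "v \<in> C" using memC zv vz by blast
      have "gval n (v!js) \<le> gval n (z!js)" using phi_step[OF zC zv] vC by simp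
      thus False using lt by simp
    next
      assume yz: "(y,z) \<in> Mupto n k L (Suc js)"
      hence tgtz: "\<not> srcM n k L z"
        using sub no_src_tgt[of z _ n k L k y k] by (auto simp: srcM_def MatchL_def)
      obtain w where zw: "(z,w) \<in> Req" and wz: "(w,z) \<in> Req\<^sup>*" using tranclD[OF zz] by blast
      have "(w,z) \<in> MatchL n k L" using Req_edge[OF zw] tgtz by blast
      hence "(w,z) \<in> newM n k L js"
        using stage_exact[of w z n k L k z js] notin[OF zC] zin by (simp add: MatchL_def)
      hence lt: "gval n (w!js) < gval n (z!js)" using g_Mdisk n by (auto simp: newM_def)
      have wC: "w \<in> C" using memC zw wz by blast
      have "gval n (z!js) \<le> gval n (w!js)" using phi_step[OF wC wz] zC by simp
      thus False using lt by simp
    qed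
  qed
qed

end
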